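(* For $a\in[1,2]$ and $b>1$ define $g(a,b)=x\,x_1+y\,y_1$, where $$x=\frac{\sqrt{a^2-1}\,(a^3-8)}{a^6},\quad x_1=(\sqrt{a^2-1}-\sqrt{b^2-1})^3+a^3,\quad y=\frac{\sqrt{b^2-1}\,(b^3-8)}{b^6},\quad y_1=(\sqrt{a^2-1}-\sqrt{b^2-1})^3+b^3.$$ Then for every $a\in(1,2)$ there exists a unique $b=\hat b(a)\in(\sqrt2,5/2)$ such that $g(a,b)<0$ for $\sqrt2<b<\hat b(a)$, $g(a,\hat b(a))=0$, and $g(a,b)>0$ for $\hat b(a)<b<5/2$. *)

theory Defs
  imports Complex_Main
begin

definition g :: "real \<Rightarrow> real \<Rightarrow> real" where
  "g a b =
    (let x  = sqrt (a^2 - 1) * (a^3 - 8) / a^6;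
         x1 = (sqrt (a^2 - 1) - sqrt (b^2 - 1))^3 + a^3;
         y  = sqrt (b^2 - 1) * (b^3 - 8) / b^6;
         y1 = (sqrt (a^2 - 1) - sqrt (b^2 - 1))^3 + b^3
     in x * x1 + y * y1)"

end

theory Submission
  imports Defs
begin


lemma g_alt: "g a = (\<lambda>b. sqrt (a^2-1) * (a^3-8) / a^6 * ((sqrt (a^2-1) - sqrt (b^2-1))^3 + a^3)
   + sqrt (b^2-1) * (b^3-8) / b^6 * ((sqrt (a^2-1) - sqrt (b^2-1))^3 + b^3))"
  by (simp add: g_def Let_def fun_eq_iff)

lemma R_deriv:
  fixes b :: real assumes b0: "b \<noteq> 0"
  shows "((\<lambda>x. (x^3-8)/x^6) has_real_derivative (-3/b^4 + 48/b^7)) (at b)"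
proof -
  have "((\<lambda>x. (x^3-8)/x^6) has_real_derivative ((3*b^2)*b^6 - (b^3-8)*(6*b^5))/(b^6*b^6)) (at b)"
    by (rule DERIV_cong[OF DERIV_divide[OF DERIV_diff[OF DERIV_pow DERIV_const] DERIV_pow]]) (use b0 in simp_all)
  moreover have "((3*b^2)*b^6 - (b^3-8)*(6*b^5))/(b^6*b^6) = -3/b^4 + 48/b^7"
    using b0 by (simp add: divide_simps) algebra
  ultimately show ?thesis by simp
qed

lemma deriv_gen:
  fixes T :: "real \<Rightarrow> real"
  assumes hT: "(T has_real_derivative T') (at b)" and b0: "b \<noteq> 0"
  shows "((\<lambda>x. X*((s - T x)^3 + a^3) + T x*((x^3-8)/x^6)*((s - T x)^3 + x^3)) has_real_derivative
     X*(3*(s - T b)^2*(-T')) + (T'*((b^3-8)/b^6) + T b * (-3/b^4 + 48/b^7))*((s-T b)^3+b^3)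
      + T b*((b^3-8)/b^6)*(3*(s-T b)^2*(-T') + 3*b^2)) (at b)"
proof -
  have c: "((\<lambda>x. (s - T x)^3) has_real_derivative 3*(s - T b)^2*(-T')) (at b)"
    by (rule DERIV_cong[OF DERIV_power[OF DERIV_diff[OF DERIV_const hT]]]) simp
  have c2: "((\<lambda>x. (s - T x)^3 + x^3) has_real_derivative 3*(s - T b)^2*(-T') + 3*b^2) (at b)"
    by (rule DERIV_cong[OF DERIV_add[OF c DERIV_pow]]) simp
  have c1: "((\<lambda>x. X*((s - T x)^3 + a^3)) has_real_derivative X*(3*(s - T b)^2*(-T'))) (at b)"
    by (rule DERIV_cong[OF DERIV_cmult[OF DERIV_add[OF c DERIV_const]]]) simp
  have m: "((\<lambda>x. T x*((x^3-8)/x^6)) has_real_derivative T'*((b^3-8)/b^6) + T b * (-3/b^4 + 48/b^7)) (at b)"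
    by (rule DERIV_cong[OF DERIV_mult'[OF hT R_deriv[OF b0]]]) simp
  have m2: "((\<lambda>x. T x*((x^3-8)/x^6)*((s - T x)^3 + x^3)) has_real_derivative
      (T'*((b^3-8)/b^6) + T b * (-3/b^4 + 48/b^7))*((s-T b)^3+b^3) + T b*((b^3-8)/b^6)*(3*(s-T b)^2*(-T') + 3*b^2)) (at b)"
    by (rule DERIV_cong[OF DERIV_mult'[OF m c2]]) simp
  show ?thesis
    by (rule DERIV_cong[OF DERIV_add[OF c1 m2]]) simp
qed
lemma sqrt_deriv:
  fixes b :: real assumes "1 < b"
  shows "((\<lambda>b. sqrt (b^2-1)) has_real_derivative b / sqrt (b^2-1)) (at b)"
proof -
  have b2: "b^2 - 1 > 0" using assms by (simp add: power2_eq_square) (smt (verit) mult_less_cancel_right2)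
  show ?thesis
    using b2 by (auto intro!: derivative_eq_intros simp: field_simps)
qed

lemma g_deriv:
  fixes a b :: real
  assumes b: "1 < b"
  defines "s \<equiv> sqrt (a^2-1)" and "t \<equiv> sqrt (b^2-1)"
  defines "X \<equiv> s * (a^3-8) / a^6" and "Y \<equiv> t*(b^3-8)/b^6"
     and "Yt \<equiv> 1/b^3 - 3*t^2/b^5 - 8/b^6 + 48*t^2/b^8"
  shows "(g a has_real_derivative (b/t) * (-3*X*(s-t)^2 - 3*Y*(s-t)^2 + Yt*(s-t)^3 + Yt*b^3 + 3*Y*b*t)) (at b)"
proof -
  have b2: "b^2 - 1 > 0" using b by (simp add: power2_eq_square) (smt (verit) mult_less_cancel_right2)
  have tpos: "t > 0" unfolding t_def using b2 by simp
  have b0: "b \<noteq> 0" using b by simp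
  have ga: "g a = (\<lambda>x. X*((s - sqrt (x^2-1))^3 + a^3) + sqrt (x^2-1)*((x^3-8)/x^6)*((s - sqrt (x^2-1))^3 + x^3))"
    unfolding g_alt X_def s_def by simp
  have D: "(g a has_real_derivative X*(3*(s - t)^2*(-(b/t))) + ((b/t)*((b^3-8)/b^6) + t * (-3/b^4 + 48/b^7))*((s-t)^3+b^3)
      + t*((b^3-8)/b^6)*(3*(s-t)^2*(-(b/t)) + 3*b^2)) (at b)"
    unfolding ga t_def using deriv_gen[OF sqrt_deriv[OF b] b0] by simp
  show ?thesis
    apply (rule DERIV_cong[OF D])
    unfolding Y_def Yt_def using tpos b0 by (simp add: divide_simps) algebra
qed

lemma Yt8_pos:
  fixes b :: real assumes "2 \<le> b^2" "b \<le> 5/2" "0 < b"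
  shows "-2*b^5 + 3*b^3 + 40*b^2 - 48 > 0"
proof (cases "b \<le> 2")
  case True
  have "b^3 \<le> 2^3" using True assms by (intro power_mono) auto
  hence "b^2*(40 - 2*b^3) \<ge> b^2 * 24" by (intro mult_left_mono) auto
  moreover have "b^2 * 24 \<ge> 48" using assms by simp
  moreover have "b^3 > 0" using assms by simp
  moreover have "b^2*(40 - 2*b^3) = 40*b^2 - 2*b^5" by algebra
  ultimately show ?thesis by linarith
next
  case False
  have "b^3 \<le> (5/2)^3" using False assms by (intro power_mono) auto
  hence "b^2*(40 - 2*b^3) \<ge> b^2 * (35/4)" by (intro mult_left_mono) (auto simp: power_divide)
  moreover have "b^2 \<ge> 4" using power_mono[of 2 b 2] False by simp
  moreover have "b^3 \<ge> 8" using power_mono[of 2 b 3] False by simp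
  moreover have "b^2*(40 - 2*b^3) = 40*b^2 - 2*b^5" by algebra
  ultimately show ?thesis by linarith
qed

lemma p_pos:
  fixes b :: real assumes "2 \<le> b" "b \<le> 5/2"
  shows "-12*b^9 + 30*b^7 + 384*b^6 - 17*b^5 - 672*b^4 + 3*b^3 + 304*b^2 - 48 > 0"
proof -
  have b3: "b^3 \<le> (5/2)^3" using assms by (intro power_mono) auto
  have b2: "b^2 \<ge> 2^2" using assms by (intro power_mono) auto
  have "12*b^9 = 12*b^3*b^6" by (simp add: power_add[symmetric])
  also have "\<dots> \<le> 12*(5/2)^3*b^6" using b3 by (intro mult_right_mono) auto
  finally have h1: "12*b^9 \<le> 375/2*b^6" by (simp add: power_divide)
  have "b^6 = b^2*b^4" by (simp add: power_add[symmetric])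
  moreover have "4*b^4 \<le> b^2*b^4" using b2 by (intro mult_right_mono) auto
  ultimately have h2: "b^6 \<ge> 4*b^4" by simp
  have "b^7 = b^2*b^5" by (simp add: power_add[symmetric])
  moreover have "1*b^5 \<le> b^2*b^5" using b2 assms by (intro mult_right_mono) auto
  ultimately have h3: "b^7 \<ge> b^5" by simp
  have pos: "b^4 > 0" "b^5 > 0" "b^3 > 0" "b^6 > 0" using assms by auto
  have b4: "4 \<le> b^2" using b2 by simp
  show ?thesis using h1 h2 h3 b4 pos by linarith
qed

lemma main_ineq:
  fixes b t :: real assumes "2 \<le> b^2" "b \<le> 5/2" "0 < b" "t^2 = b^2 - 1" "0 \<le> t"
  shows "b^8+16*b^5-24*b^3 - t^3 * (b^5+3*b^3+16*b^2-48) > 0"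
proof -
  have b3: "b^3 > 0" using assms by simp
  have "b^5 + 16*b^2 - 24 > 0" using assms by (smt (verit) zero_less_power)
  hence P: "b^8+16*b^5-24*b^3 > 0"
    using b3 mult_pos_pos[of "b^3" "b^5 + 16*b^2 - 24"] by (simp add: algebra_simps power_add[symmetric])
  show ?thesis
  proof (cases "b^5+3*b^3+16*b^2-48 \<le> 0")
    case True
    hence "t^3 * (b^5+3*b^3+16*b^2-48) \<le> 0" using assms by (simp add: mult_nonneg_nonpos)
    thus ?thesis using P by simp
  next
    case Q: False
    have tb: "t < b" using assms by (smt (verit) power2_less_imp_less power_mono)
    show ?thesis
    proof (cases "b \<le> 2")
      case True
      have "t^3 < b^3" using tb assms by (intro power_strict_mono) auto
      hence "t^3 * (b^5+3*b^3+16*b^2-48) < b^3 * (b^5+3*b^3+16*b^2-48)" using Q by simp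
      moreover have "b^3 \<le> 2^3" using True assms by (intro power_mono) auto
      moreover have "b^3 * (b^5+3*b^3+16*b^2-48) = b^8+16*b^5-24*b^3 - 3*b^3*(8 - b^3)"
        by (simp add: algebra_simps power_add[symmetric])
      moreover have "3*b^3*(8 - b^3) \<ge> 0" using b3 \<open>b^3 \<le> 2^3\<close> by simp
      ultimately show ?thesis by linarith
    next
      case False
      have e1: "(2*b*t)^2 = 4*b^2*(b^2-1)" by (simp add: power_mult_distrib assms)
      have e2: "(2*b^2-1)^2 = 4*b^2*(b^2-1) + 1" by (simp add: algebra_simps power2_eq_square)
      have "(2*b*t)^2 \<le> (2*b^2-1)^2" unfolding e1 e2 by simp
      moreover have "0 \<le> 2*b^2-1" using assms(1) by simp
      ultimately have "2*b*t \<le> 2*b^2-1" by (rule power2_le_imp_le)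
      moreover have "0 \<le> 2*b*t" using assms(3,5) by simp
      ultimately have "(2*b*t)^3 \<le> (2*b^2-1)^3" by (rule power_mono)
      hence "(2*b*t)^3 * (b^5+3*b^3+16*b^2-48) \<le> (2*b^2-1)^3 * (b^5+3*b^3+16*b^2-48)"
        using Q by (intro mult_right_mono) auto
      moreover have "8*b^3*(b^8+16*b^5-24*b^3) - (2*b^2-1)^3 * (b^5+3*b^3+16*b^2-48)
         = -12*b^9 + 30*b^7 + 384*b^6 - 17*b^5 - 672*b^4 + 3*b^3 + 304*b^2 - 48"
        by algebra
      moreover have "-12*b^9 + 30*b^7 + 384*b^6 - 17*b^5 - 672*b^4 + 3*b^3 + 304*b^2 - 48 > 0"
        using p_pos False assms by simp
      moreover have "8*b^3*(t^3 * (b^5+3*b^3+16*b^2-48)) = (2*b*t)^3 * (b^5+3*b^3+16*b^2-48)" by algebra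
      ultimately have "8*b^3*(t^3 * (b^5+3*b^3+16*b^2-48)) < 8*b^3*(b^8+16*b^5-24*b^3)"
        by linarith
      hence "t^3 * (b^5+3*b^3+16*b^2-48) < b^8+16*b^5-24*b^3" using b3
        by (simp add: mult_less_cancel_left)
      thus ?thesis by simp
    qed
  qed
qed

lemma E_pos:
  fixes a b :: real
  assumes a1: "1 < a" and a2: "a < 2" and b1: "sqrt 2 \<le> b" and b2: "b \<le> 5/2"
  defines "s \<equiv> sqrt (a^2-1)" and "t \<equiv> sqrt (b^2-1)"
  defines "X \<equiv> s * (a^3-8) / a^6" and "Y \<equiv> t*(b^3-8)/b^6"
     and "Yt \<equiv> 1/b^3 - 3*t^2/b^5 - 8/b^6 + 48*t^2/b^8"
  shows "-3*X*(s-t)^2 - 3*Y*(s-t)^2 + Yt*(s-t)^3 + Yt*b^3 + 3*Y*b*t > 0"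
proof -
  have bpos: "b > 0" using b1 by (smt (verit) real_sqrt_gt_zero)
  have "(sqrt 2)^2 \<le> b^2" using b1 by (intro power_mono) auto
  hence bsq: "2 \<le> b^2" by simp
  have t2: "t^2 = b^2 - 1" unfolding t_def by (rule real_sqrt_pow2) (use bsq in linarith)
  have t0: "t \<ge> 0" unfolding t_def using bsq by simp
  have "b^2 - 1 \<ge> 1" using bsq by simp
  hence t1: "t \<ge> 1" unfolding t_def by simp
  have asq: "1 \<le> a^2" using one_le_power[of a 2] a1 by simp
  have s0: "s \<ge> 0" unfolding s_def using asq by simp
  have "a^2 < 2^2" using a1 a2 by (intro power_strict_mono) auto
  hence "s^2 < 2^2" unfolding s_def using asq by simp
  hence s2: "s < 2" using s0 by (smt (verit) power_mono)
  have "\<bar>s - t\<bar> \<le> \<bar>t\<bar>" using s0 s2 t1 by auto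
  hence dsq: "(s-t)^2 \<le> t^2" by (simp add: abs_le_square_iff)
  have "a^3 < 2^3" using a1 a2 by (intro power_strict_mono) auto
  hence X0: "X \<le> 0" unfolding X_def using s0 a1
    by (intro divide_nonpos_pos mult_nonneg_nonpos) auto
  have b8: "b^8 > 0" using bpos by simp
  have e: "b^8/b^3 = b^5" "b^8/b^5 = b^3" "b^8/b^6 = b^2" "b^8/b^8 = 1"
    using bpos by (simp_all add: divide_eq_eq power_add[symmetric])
  have "Yt * b^8 = b^8/b^3 - 3*t^2*(b^8/b^5) - 8*(b^8/b^6) + 48*t^2*(b^8/b^8)"
    unfolding Yt_def by (simp add: algebra_simps)
  also have "\<dots> = -2*b^5+3*b^3+40*b^2-48" unfolding e t2 by algebra
  finally have Yt8: "Yt * b^8 = -2*b^5+3*b^3+40*b^2-48" .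
  have "Y * b^8 = t * (b^3-8) * (b^8/b^6)" unfolding Y_def by (simp only: times_divide_eq_left times_divide_eq_right)
  hence Y8: "Y * b^8 = t * b^2 * (b^3-8)" unfolding e by (simp add: algebra_simps)
  have "Yt * b^8 > 0" unfolding Yt8 using Yt8_pos bsq b2 bpos by simp
  hence Ytp: "Yt > 0" using b8 by (simp add: zero_less_mult_iff)
  define A where "A = Yt*b^3 + 3*Y*b*t"
  define K where "K = -Yt*t - 3*Y"
  have A8: "A * b^8 = b^8+16*b^5-24*b^3"
  proof -
    have "A * b^8 = (Yt*b^8)*b^3 + 3*(Y*b^8)*b*t" unfolding A_def by algebra
    also have "\<dots> = b^8+16*b^5-24*b^3" unfolding Yt8 Y8 using t2 by algebra
    finally show ?thesis .
  qed
  have AK8: "(A + t^2*K) * b^8 = b^8+16*b^5-24*b^3 - t^3 * (b^5+3*b^3+16*b^2-48)"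
  proof -
    have "(A + t^2*K) * b^8 = A*b^8 - t^3*(Yt*b^8) - 3*t^2*(Y*b^8)" unfolding K_def by algebra
    also have "\<dots> = b^8+16*b^5-24*b^3 - t^3 * (b^5+3*b^3+16*b^2-48)" unfolding A8 Yt8 Y8 by algebra
    finally show ?thesis .
  qed
  have "(A + t^2*K) * b^8 > 0" unfolding AK8 using main_ineq[OF bsq b2 bpos t2 t0] .
  hence AK: "A + t^2*K > 0" using b8 by (simp add: zero_less_mult_iff)
  have "b^5 + 16*b^2 - 24 > 0" using bsq bpos by (smt (verit) zero_less_power)
  hence "b^3 * (b^5 + 16*b^2 - 24) > 0" using bpos by simp
  moreover have "b^3 * (b^5 + 16*b^2 - 24) = b^8+16*b^5-24*b^3" by algebra
  ultimately have "A * b^8 > 0" unfolding A8 by simp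
  hence A0: "A > 0" using b8 by (simp add: zero_less_mult_iff)
  define L where "L = Yt*(s-t) - 3*Y"
  have f: "- 3*Y*(s-t)^2 + Yt*(s-t)^3 = (s-t)^2 * L" unfolding L_def by algebra
  have fb: "(s-t)^2 * L \<ge> min 0 (t^2*K)"
  proof (cases "L \<ge> 0")
    case True
    hence "(s-t)^2 * L \<ge> 0" by simp
    thus ?thesis by (simp add: min_le_iff_disj)
  next
    case False
    have "Yt*(-t) \<le> Yt*(s-t)" using Ytp s0 by (intro mult_left_mono) auto
    hence LK: "K \<le> L" unfolding K_def L_def by simp
    have "t^2 * L \<le> (s-t)^2 * L" using dsq False by (intro mult_right_mono_neg) auto
    moreover have "t^2 * K \<le> t^2 * L" using LK by (intro mult_left_mono) auto
    ultimately show ?thesis by simp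
  qed
  have "X*(s-t)^2 \<le> 0" using X0 by (simp add: mult_nonpos_nonneg)
  hence Xt: "-3*X*(s-t)^2 \<ge> 0" by simp
  have "-3*X*(s-t)^2 - 3*Y*(s-t)^2 + Yt*(s-t)^3 + Yt*b^3 + 3*Y*b*t = -3*X*(s-t)^2 + (s-t)^2 * L + A"
    unfolding A_def L_def by algebra
  moreover have "(s-t)^2 * L + A > 0"
  proof (cases "t^2*K \<le> 0")
    case True
    have "min 0 (t^2*K) = t^2*K" using True by (rule min_absorb2)
    thus ?thesis using fb AK by linarith
  next
    case False
    have "min 0 (t^2*K) = 0" using False by (intro min_absorb1) simp
    thus ?thesis using fb A0 by linarith
  qed
  ultimately show ?thesis using Xt by linarith
qed



lemma h_bound:
  fixes a s t a0 a1 s0 s1 tl tu :: real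
  assumes a0: "1 \<le> a0" "a0 \<le> a" "a \<le> a1" "a1 \<le> 2" and s: "0 \<le> s0" "s0 \<le> s" "s \<le> s1" "s1 \<le> tl"
    and t: "tl \<le> t" "t \<le> tu"
  shows "s*(a^3-8)/a^6*((s-t)^3 + a^3) + t*((5/2)^3-8)/(5/2)^6*((s-t)^3 + (5/2)^3)
     \<ge> s1*(1 - 8/a0^3) + s0*(8-a1^3)*(1/a1^6)*(tl-s1)^3 - 488*tu/15625*(tu-s0)^3 + 61*tl/125"
proof -
  have apos: "a > 0" "a0 > 0" "a1 > 0" using a0 by auto
  have a3: "a^3 \<noteq> 0" using apos by simp
  have e1: "s*(a^3-8)/a^6*a^3 = s*(1-8/a^3)"
  proof -
    have a6: "a^6 = a^3*a^3" by (simp add: power_add[symmetric])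
    have "s*(a^3-8)/a^6*a^3 = (s*(a^3-8))*a^3/(a^3*a^3)" unfolding a6 by (simp only: times_divide_eq_left)
    also have "\<dots> = s*(a^3-8)/a^3" by (rule mult_divide_mult_cancel_right[OF a3])
    also have "\<dots> = s*(1-8/a^3)" using a3 by (simp add: field_simps)
    finally show ?thesis .
  qed
  have id: "s*(a^3-8)/a^6*((s-t)^3 + a^3) + t*((5/2)^3-8)/(5/2)^6*((s-t)^3 + (5/2)^3)
     = s*(1-8/a^3) + s*(8-a^3)*(1/a^6)*(t-s)^3 - 488*t/15625*(t-s)^3 + 61*t/125"
  proof -
    have g1: "\<And>q. s*(a^3-8)*q*((s-t)^3 + a^3) = s*(a^3-8)*q*a^3 + s*(8-a^3)*q*(t-s)^3"
      by algebra
    have "s*(a^3-8)/a^6*((s-t)^3 + a^3) = s*(a^3-8)/a^6*a^3 + s*(8-a^3)*(1/a^6)*(t-s)^3"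
      using g1[of "1/a^6"] by simp
    moreover have "t*((5/2)^3-8)/(5/2)^6*((s-t)^3 + (5/2)^3) = - 488*t/15625*(t-s)^3 + 61*t/125"
    proof -
      have p6: "(5/2::real)^6 = 15625/64" and p3: "(5/2::real)^3 = 125/8" by (simp_all add: power_divide)
      show ?thesis unfolding p6 p3 by (simp add: divide_simps) algebra
    qed
    ultimately show ?thesis unfolding e1 by simp
  qed
  have "a0^3 \<le> a^3" using a0 by (intro power_mono) auto
  hence "8/a^3 \<le> 8/a0^3" using apos by (intro divide_left_mono) auto
  hence c1: "1-8/a0^3 \<le> 1-8/a^3" by simp
  have "a^3 \<le> 2^3" using a0 apos by (intro power_mono) auto
  hence "8/a^3 \<ge> 1" using apos by simp
  hence c0: "1-8/a0^3 \<le> 0" using c1 by simp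
  have b1: "s*(1-8/a^3) \<ge> s1*(1-8/a0^3)"
  proof -
    have "s*(1-8/a0^3) \<le> s*(1-8/a^3)" using c1 s by (intro mult_left_mono) auto
    moreover have "s1*(1-8/a0^3) \<le> s*(1-8/a0^3)" using c0 s by (intro mult_right_mono_neg) auto
    ultimately show ?thesis by simp
  qed
  have b2: "s0*(8-a1^3)*(1/a1^6)*(tl-s1)^3 \<le> s*(8-a^3)*(1/a^6)*(t-s)^3"
  proof -
    have "a^3 \<le> a1^3" using a0 apos by (intro power_mono) auto
    moreover have "a1^3 \<le> 2^3" using a0 apos by (intro power_mono) auto
    ultimately have f1: "s0*(8-a1^3) \<le> s*(8-a^3)" using s by (intro mult_mono) auto
    have "a^6 \<le> a1^6" using a0 apos by (intro power_mono) auto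
    hence f2: "1/a1^6 \<le> 1/a^6" using apos by (intro divide_left_mono) auto
    have f3: "(tl-s1)^3 \<le> (t-s)^3" using s t by (intro power_mono) auto
    have nn: "0 \<le> s*(8-a^3)" using s \<open>a^3 \<le> a1^3\<close> \<open>a1^3 \<le> 2^3\<close> by simp
    have "s0*(8-a1^3)*(1/a1^6) \<le> s*(8-a^3)*(1/a^6)"
      by (rule mult_mono[OF f1 f2 nn]) (use apos in simp)
    moreover have "0 \<le> s*(8-a^3)*(1/a^6)" using nn apos by simp
    moreover have "0 \<le> (tl-s1)^3" using s by simp
    ultimately show ?thesis using f3 by (metis mult_mono)
  qed
  have b3: "488*t/15625*(t-s)^3 \<le> 488*tu/15625*(tu-s0)^3"
  proof -
    have "(t-s)^3 \<le> (tu-s0)^3" using s t by (intro power_mono) auto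
    thus ?thesis using s t by (intro mult_mono) auto
  qed
  have b4: "61*tl/125 \<le> 61*t/125" using t by simp
  show ?thesis unfolding id using b1 b2 b3 b4 by linarith
qed


lemma g_deriv_pos:
  fixes a b :: real
  assumes a1: "1 < a" and a2: "a < 2" and b1: "sqrt 2 \<le> b" and b2: "b \<le> 5/2"
  shows "\<exists>D. DERIV (g a) b :> D \<and> D > 0"
proof -
  have sq1: "1 < sqrt 2" by simp
  have bb: "1 < b" using sq1 b1 by linarith
  have "1 < b^2" using bb by (simp add: one_less_power)
  hence tpos: "sqrt (b^2-1) > 0" by simp
  define s where "s = sqrt (a^2-1)"
  define t where "t = sqrt (b^2-1)"
  define X where "X = s * (a^3-8) / a^6"
  define Y where "Y = t*(b^3-8)/b^6"
  define Yt where "Yt = 1/b^3 - 3*t^2/b^5 - 8/b^6 + 48*t^2/b^8"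
  define E where "E = -3*X*(s-t)^2 - 3*Y*(s-t)^2 + Yt*(s-t)^3 + Yt*b^3 + 3*Y*b*t"
  have d: "DERIV (g a) b :> (b/t)*E"
    unfolding E_def X_def Y_def Yt_def s_def t_def by (rule g_deriv[OF bb])
  have e: "E > 0"
    unfolding E_def X_def Y_def Yt_def s_def t_def by (rule E_pos[OF a1 a2 b1 b2])
  have "(b/t)*E > 0" using e tpos bb unfolding t_def by simp
  thus ?thesis using d by blast
qed

lemma g52_from_bound:
  fixes a a0 a1 s0 s1 :: real
  assumes "1 \<le> a0" "a0 \<le> a" "a \<le> a1" "a1 \<le> 2" "0 \<le> s0" "s0^2 \<le> a0^2 - 1" "a1^2 - 1 \<le> s1^2"
    "0 \<le> s1" "s1 \<le> 22912/10000"
    and pos: "0 < s1*(1 - 8/a0^3) + s0*(8-a1^3)*(1/a1^6)*(22912/10000-s1)^3 - 488*(22913/10000)/15625*(22913/10000-s0)^3 + 61*(22912/10000)/125"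
  shows "0 < g a (5/2)"
proof -
  have n: "(5/2::real)^2 - 1 = 21/4" by (simp add: power_divide)
  have tl: "22912/10000 \<le> sqrt ((5/2)^2 - 1)" unfolding n by (rule real_le_rsqrt) (simp add: power_divide)
  have tu: "sqrt ((5/2)^2 - 1) \<le> 22913/10000" unfolding n by (rule real_le_lsqrt) (simp_all add: power_divide)
  have "a0^2 \<le> a^2" using assms by (intro power_mono) auto
  hence s0: "s0 \<le> sqrt (a^2-1)" using assms(6) by (intro real_le_rsqrt) linarith
  have "a^2 \<le> a1^2" using assms by (intro power_mono) auto
  hence s1: "sqrt (a^2-1) \<le> s1" using assms(7,8) by (intro real_le_lsqrt) linarith+
  have "s1*(1 - 8/a0^3) + s0*(8-a1^3)*(1/a1^6)*(22912/10000-s1)^3 - 488*(22913/10000)/15625*(22913/10000-s0)^3 + 61*(22912/10000)/125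
     \<le> g a (5/2)"
    unfolding g_alt
    using h_bound[OF assms(1-5) s0 s1 assms(9) tl tu] by simp
  thus ?thesis using pos by linarith
qed

lemma g52_small:
  fixes a :: real
  assumes "1 < a" "a \<le> 27/20"
  shows "0 < g a (5/2)"
proof -
  define s where "s = sqrt (a^2-1)"
  define t where "t = sqrt ((5/2::real)^2-1)"
  have asq: "1 \<le> a^2" using one_le_power[of a 2] assms by simp
  have s0: "0 \<le> s" unfolding s_def using asq by simp
  have n: "(5/2::real)^2 - 1 = 21/4" by (simp add: power_divide)
  have tl: "229/100 \<le> t" unfolding t_def n by (rule real_le_rsqrt) (simp add: power_divide)
  have tu: "t \<le> 23/10" unfolding t_def n by (rule real_le_lsqrt) (simp_all add: power_divide)
  have t2: "t^2 = 21/4" unfolding t_def n by simp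
  have "a^2 \<le> (27/20)^2" using assms by (intro power_mono) auto
  hence "a^2 \<le> 729/400" by (simp add: power_divide)
  hence s1: "s \<le> 94/100" unfolding s_def by (intro real_le_lsqrt) (simp_all add: power_divide)
  have "s - t \<le> -a" using s1 tl assms by simp
  hence "(s-t)^3 \<le> (-a)^3" by (intro power_mono_odd) auto
  hence c1: "(s-t)^3 + a^3 \<le> 0" by simp
  have "a^3 < 2^3" using assms by (intro power_strict_mono) auto
  hence X: "s*(a^3-8)/a^6 \<le> 0" using s0 assms by (intro divide_nonpos_pos mult_nonneg_nonpos) auto
  have T1: "s*(a^3-8)/a^6*((s-t)^3 + a^3) \<ge> 0" by (rule mult_nonpos_nonpos[OF X c1])
  have "-t \<le> s - t" using s0 by simp
  hence "(-t)^3 \<le> (s-t)^3" by (intro power_mono_odd) auto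
  moreover have "t^3 = t * t^2" by algebra
  ultimately have "(s-t)^3 \<ge> - (21/4) * t" unfolding t2 by simp
  moreover have "(5/2::real)^3 = 125/8" by (simp add: power_divide)
  ultimately have "(s-t)^3 + (5/2)^3 > 0" using tu by linarith
  moreover have "t*((5/2)^3-8)/(5/2)^6 > 0" using tl by (simp add: power_divide)
  ultimately have T2: "t*((5/2)^3-8)/(5/2)^6 * ((s-t)^3 + (5/2)^3) > 0" by (simp only: mult_pos_pos)
  show ?thesis unfolding g_alt using T1 T2 unfolding s_def t_def by simp
qed

lemma g52_pos:
  fixes a :: real
  assumes "1 < a" "a < 2"
  shows "0 < g a (5/2)"
proof -
  have c0: "a \<le> 27/20 \<Longrightarrow> 0 < g a (5/2)" using g52_small assms by simp
  have i0: "27/20 \<le> a \<Longrightarrow> a \<le> 89/64 \<Longrightarrow> 0 < g a (5/2)"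
    by (rule g52_from_bound[of "27/20" a "89/64" "181/200" "121/125"]) (simp_all add: power_divide)
  have c1: "a \<le> 89/64 \<Longrightarrow> 0 < g a (5/2)" using c0 i0 by (cases "a \<le> 27/20") auto
  have i1: "89/64 \<le> a \<Longrightarrow> a \<le> 229/160 \<Longrightarrow> 0 < g a (5/2)"
    by (rule g52_from_bound[of "89/64" a "229/160" "193/200" "41/40"]) (simp_all add: power_divide)
  have c2: "a \<le> 229/160 \<Longrightarrow> 0 < g a (5/2)" using c1 i1 by (cases "a \<le> 89/64") auto
  have i2: "229/160 \<le> a \<Longrightarrow> a \<le> 929/640 \<Longrightarrow> 0 < g a (5/2)"
    by (rule g52_from_bound[of "229/160" a "929/640" "511/500" "527/500"]) (simp_all add: power_divide)
  have c3: "a \<le> 929/640 \<Longrightarrow> 0 < g a (5/2)" using c2 i2 by (cases "a \<le> 229/160") auto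
  have i3: "929/640 \<le> a \<Longrightarrow> a \<le> 471/320 \<Longrightarrow> 0 < g a (5/2)"
    by (rule g52_from_bound[of "929/640" a "471/320" "1051/1000" "541/500"]) (simp_all add: power_divide)
  have c4: "a \<le> 471/320 \<Longrightarrow> 0 < g a (5/2)" using c3 i3 by (cases "a \<le> 929/640") auto
  have i4: "471/320 \<le> a \<Longrightarrow> a \<le> 191/128 \<Longrightarrow> 0 < g a (5/2)"
    by (rule g52_from_bound[of "471/320" a "191/128" "1079/1000" "1109/1000"]) (simp_all add: power_divide)
  have c5: "a \<le> 191/128 \<Longrightarrow> 0 < g a (5/2)" using c4 i4 by (cases "a \<le> 471/320") auto
  have i5: "191/128 \<le> a \<Longrightarrow> a \<le> 121/80 \<Longrightarrow> 0 < g a (5/2)"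
    by (rule g52_from_bound[of "191/128" a "121/80" "553/500" "142/125"]) (simp_all add: power_divide)
  have c6: "a \<le> 121/80 \<Longrightarrow> 0 < g a (5/2)" using c5 i5 by (cases "a \<le> 191/128") auto
  have i6: "121/80 \<le> a \<Longrightarrow> a \<le> 981/640 \<Longrightarrow> 0 < g a (5/2)"
    by (rule g52_from_bound[of "121/80" a "981/640" "1133/1000" "1163/1000"]) (simp_all add: power_divide)
  have c7: "a \<le> 981/640 \<Longrightarrow> 0 < g a (5/2)" using c6 i6 by (cases "a \<le> 121/80") auto
  have i7: "981/640 \<le> a \<Longrightarrow> a \<le> 497/320 \<Longrightarrow> 0 < g a (5/2)"
    by (rule g52_from_bound[of "981/640" a "497/320" "29/25" "119/100"]) (simp_all add: power_divide)
  have c8: "a \<le> 497/320 \<Longrightarrow> 0 < g a (5/2)" using c7 i7 by (cases "a \<le> 981/640") auto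
  have i8: "497/320 \<le> a \<Longrightarrow> a \<le> 1007/640 \<Longrightarrow> 0 < g a (5/2)"
    by (rule g52_from_bound[of "497/320" a "1007/640" "1187/1000" "152/125"]) (simp_all add: power_divide)
  have c9: "a \<le> 1007/640 \<Longrightarrow> 0 < g a (5/2)" using c8 i8 by (cases "a \<le> 497/320") auto
  have i9: "1007/640 \<le> a \<Longrightarrow> a \<le> 51/32 \<Longrightarrow> 0 < g a (5/2)"
    by (rule g52_from_bound[of "1007/640" a "51/32" "1213/1000" "621/500"]) (simp_all add: power_divide)
  have c10: "a \<le> 51/32 \<Longrightarrow> 0 < g a (5/2)" using c9 i9 by (cases "a \<le> 1007/640") auto
  have i10: "51/32 \<le> a \<Longrightarrow> a \<le> 523/320 \<Longrightarrow> 0 < g a (5/2)"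
    by (rule g52_from_bound[of "51/32" a "523/320" "1239/1000" "647/500"]) (simp_all add: power_divide)
  have c11: "a \<le> 523/320 \<Longrightarrow> 0 < g a (5/2)" using c10 i10 by (cases "a \<le> 51/32") auto
  have i11: "523/320 \<le> a \<Longrightarrow> a \<le> 67/40 \<Longrightarrow> 0 < g a (5/2)"
    by (rule g52_from_bound[of "523/320" a "67/40" "1291/1000" "269/200"]) (simp_all add: power_divide)
  have c12: "a \<le> 67/40 \<Longrightarrow> 0 < g a (5/2)" using c11 i11 by (cases "a \<le> 523/320") auto
  have i12: "67/40 \<le> a \<Longrightarrow> a \<le> 281/160 \<Longrightarrow> 0 < g a (5/2)"
    by (rule g52_from_bound[of "67/40" a "281/160" "671/500" "289/200"]) (simp_all add: power_divide)
  have c13: "a \<le> 281/160 \<Longrightarrow> 0 < g a (5/2)" using c12 i12 by (cases "a \<le> 67/40") auto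
  have i13: "281/160 \<le> a \<Longrightarrow> a \<le> 147/80 \<Longrightarrow> 0 < g a (5/2)"
    by (rule g52_from_bound[of "281/160" a "147/80" "721/500" "1543/1000"]) (simp_all add: power_divide)
  have c14: "a \<le> 147/80 \<Longrightarrow> 0 < g a (5/2)" using c13 i13 by (cases "a \<le> 281/160") auto
  have i14: "147/80 \<le> a \<Longrightarrow> a \<le> 2 \<Longrightarrow> 0 < g a (5/2)"
    by (rule g52_from_bound[of "147/80" a "2" "77/50" "867/500"]) (simp_all add: power_divide)
  have c15: "a \<le> 2 \<Longrightarrow> 0 < g a (5/2)" using c14 i14 by (cases "a \<le> 147/80") auto
  show ?thesis using c15 assms by simp
qed

lemma g_sqrt2_neg:
  fixes a :: real
  assumes "1 < a" "a < 2"
  shows "g a (sqrt 2) < 0"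
proof -
  define s where "s = sqrt (a^2-1)"
  have asq: "1 \<le> a^2" using one_le_power[of a 2] assms by simp
  have s0: "0 \<le> s" unfolding s_def using asq by simp
  have e1: "sqrt ((sqrt 2)^2 - 1) = 1" by simp
  have e3: "(sqrt 2)^3 = 2 * sqrt 2" by (simp add: power3_eq_cube)
  have e6: "(sqrt 2)^6 = 8" proof -
    have "(sqrt 2)^6 = (sqrt 2)^2 * (sqrt 2)^2 * (sqrt 2)^2" by algebra
    thus ?thesis by simp
  qed
  have "a^3 < 2^3" using assms by (intro power_strict_mono) auto
  moreover have "1 < a^2" using assms by (simp add: one_less_power)
  hence "s > 0" unfolding s_def by simp
  ultimately have X: "s*(a^3-8)/a^6 < 0" using assms by (intro divide_neg_pos mult_pos_neg) auto
  have "(-1)^3 \<le> (s-1)^3" using s0 by (intro power_mono_odd) auto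
  hence m1: "(s-1)^3 \<ge> -1" by simp
  have "1 < a^3" using assms by (simp add: one_less_power)
  hence "(s-1)^3 + a^3 > 0" using m1 by simp
  hence T1: "s*(a^3-8)/a^6*((s-1)^3 + a^3) < 0" by (rule mult_neg_pos[OF X])
  have sq: "sqrt 2 > 1" by simp
  have "(s-1)^3 + 2*sqrt 2 > 0" using m1 sq by linarith
  moreover have "(2*sqrt 2 - 8)/8 < 0" using real_sqrt_less_iff[of 2 16] by simp
  ultimately have T2: "(2*sqrt 2 - 8)/8 * ((s-1)^3 + 2*sqrt 2) < 0" by (simp only: mult_neg_pos)
  have "g a (sqrt 2) = s*(a^3-8)/a^6*((s-1)^3 + a^3) + (2*sqrt 2 - 8)/8 * ((s-1)^3 + 2*sqrt 2)"
    unfolding g_alt e1 e3 e6 s_def by simp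
  thus ?thesis using T1 T2 by simp
qed

theorem lemma4:
  fixes a :: real
  assumes "1 < a" and "a < 2"
  shows "\<exists>!bh. sqrt 2 < bh \<and> bh < 5/2 \<and>
           (\<forall>b. sqrt 2 < b \<and> b < bh \<longrightarrow> g a b < 0) \<and>
           g a bh = 0 \<and>
           (\<forall>b. bh < b \<and> b < 5/2 \<longrightarrow> g a b > 0)"
proof -
  have sq1: "1 < sqrt 2" by simp
  have deriv: "\<exists>D. DERIV (g a) z :> D \<and> D > 0" if "sqrt 2 \<le> z" "z \<le> 5/2" for z
    using g_deriv_pos[OF assms that] .
  have mono: "g a x < g a y" if "sqrt 2 \<le> x" "x < y" "y \<le> 5/2" for x y
    using that by (intro DERIV_pos_imp_increasing[OF \<open>x < y\<close>]) (intro deriv; linarith)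
  have cont: "\<forall>z. sqrt 2 \<le> z \<and> z \<le> 5/2 \<longrightarrow> isCont (g a) z"
    using deriv DERIV_isCont by blast
  have neg: "g a (sqrt 2) < 0" using g_sqrt2_neg assms .
  have pos: "g a (5/2) > 0" using g52_pos assms .
  have sq52: "sqrt 2 \<le> 5/2" by (rule real_le_lsqrt) (simp_all add: power_divide)
  obtain bh where bh: "sqrt 2 \<le> bh" "bh \<le> 5/2" "g a bh = 0"
    using IVT[of "g a" "sqrt 2" 0 "5/2", OF _ _ sq52 cont] neg pos by auto
  have bh1: "sqrt 2 < bh" using bh neg by (metis order_le_less less_irrefl)
  have bh2: "bh < 5/2" using bh pos by (metis order_le_less less_irrefl)
  show ?thesis
  proof (rule ex1I[of _ bh], intro conjI allI impI)
    show "sqrt 2 < bh" "bh < 5/2" "g a bh = 0" using bh1 bh2 bh by auto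
  next
    fix b assume "sqrt 2 < b \<and> b < bh"
    thus "g a b < 0" using mono[of b bh] bh bh2 by auto
  next
    fix b assume "bh < b \<and> b < 5/2"
    thus "g a b > 0" using mono[of bh b] bh bh1 by auto
  next
    fix y assume y: "sqrt 2 < y \<and> y < 5/2 \<and> (\<forall>b. sqrt 2 < b \<and> b < y \<longrightarrow> g a b < 0) \<and>
           g a y = 0 \<and> (\<forall>b. y < b \<and> b < 5/2 \<longrightarrow> g a b > 0)"
    show "y = bh"
    proof (rule ccontr)
      assume "y \<noteq> bh"
      hence "y < bh \<or> bh < y" by auto
      thus False
      proof
        assume "y < bh" thus False using mono[of y bh] y bh by auto
      next
        assume "bh < y" thus False using mono[of bh y] y bh bh1 by auto
      qed
    qed
  qed
qed

end
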